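(* Let $u_t+uu_x=A^2(t,x)u_{xx}+A^1(t,x)u_x$ and $\tilde u_{\tilde t}+\tilde u\tilde u_{\tilde x}=\tilde A^2(\tilde t,\tilde x)\tilde u_{\tilde x\tilde x}+\tilde A^1(\tilde t,\tilde x)\tilde u_{\tilde x}$ be two equations of the class $\hat{\mathcal L}$. A point transformation in the space with coordinates $(t,x,u)$ maps the first equation to the second if and only if its components are of the form \[ \tilde t=T,\quad \tilde x=T_tU^1x+X^0,\quad \tilde u=U^1u-U^1_tx+U^0, \] where $T$, $X^0$, $U^0$, $U^1$ are smooth functions of $t$ with $T_tU^1\neq0$ satisfying $U^1_{tt}x-U^0_t=A^1U^1_t$ identically in $(t,x)$, and the arbitrary elements are related by \[ \tilde A^1=U^1A^1-U^1_tx+U^0-\frac{(T_tU^1)_tx+X^0_t}{T_t},\qquad \tilde A^2=T_t(U^1)^2A^2, \] the left-hand sides being evaluated at the new variables and the right-hand sides at $(t,x)$.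
   Context: All functions are smooth. $\hat{\mathcal L}$ denotes the class of equations $u_t+uu_x=A^2(t,x)u_{xx}+A^1(t,x)u_x$ for $u(t,x)$, whose arbitrary elements $A^1$, $A^2$ are smooth functions of $(t,x)$ with $A^2\neq0$ (superscripts on $A$ are indices, not exponents). *)

theory Defs
  imports "HOL-Analysis.Analysis"
begin

coinductive smooth1 :: "(real \<Rightarrow> real) \<Rightarrow> bool" where
  "(\<forall>t. f differentiable (at t)) \<Longrightarrow> smooth1 (deriv f) \<Longrightarrow> smooth1 f"

definition pd1_2 :: "(real \<Rightarrow> real \<Rightarrow> real) \<Rightarrow> real \<Rightarrow> real \<Rightarrow> real" where
  "pd1_2 f t x = deriv (\<lambda>a. f a x) t"
definition pd2_2 :: "(real \<Rightarrow> real \<Rightarrow> real) \<Rightarrow> real \<Rightarrow> real \<Rightarrow> real" where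
  "pd2_2 f t x = deriv (\<lambda>a. f t a) x"

coinductive smooth2 :: "(real \<Rightarrow> real \<Rightarrow> real) \<Rightarrow> bool" where
  "(\<forall>z. (\<lambda>(t, x). f t x) differentiable (at z)) \<Longrightarrow>
   smooth2 (pd1_2 f) \<Longrightarrow> smooth2 (pd2_2 f) \<Longrightarrow> smooth2 f"

definition pt :: "(real \<Rightarrow> real \<Rightarrow> real \<Rightarrow> real) \<Rightarrow> real \<Rightarrow> real \<Rightarrow> real \<Rightarrow> real" where
  "pt F t x u = deriv (\<lambda>a. F a x u) t"
definition px :: "(real \<Rightarrow> real \<Rightarrow> real \<Rightarrow> real) \<Rightarrow> real \<Rightarrow> real \<Rightarrow> real \<Rightarrow> real" where
  "px F t x u = deriv (\<lambda>a. F t a u) x"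
definition pu :: "(real \<Rightarrow> real \<Rightarrow> real \<Rightarrow> real) \<Rightarrow> real \<Rightarrow> real \<Rightarrow> real \<Rightarrow> real" where
  "pu F t x u = deriv (\<lambda>a. F t x a) u"

coinductive smooth3 :: "(real \<Rightarrow> real \<Rightarrow> real \<Rightarrow> real) \<Rightarrow> bool" where
  "(\<forall>z. (\<lambda>(t, x, u). f t x u) differentiable (at z)) \<Longrightarrow>
   smooth3 (pt f) \<Longrightarrow> smooth3 (px f) \<Longrightarrow> smooth3 (pu f) \<Longrightarrow> smooth3 f"

definition in_class_L :: "(real \<Rightarrow> real \<Rightarrow> real) \<Rightarrow> (real \<Rightarrow> real \<Rightarrow> real) \<Rightarrow> bool" where
  "in_class_L A1 A2 \<longleftrightarrow> smooth2 A1 \<and> smooth2 A2 \<and> (\<forall>t x. A2 t x \<noteq> 0)"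

definition point_transformation ::
  "(real \<Rightarrow> real \<Rightarrow> real \<Rightarrow> real) \<Rightarrow> (real \<Rightarrow> real \<Rightarrow> real \<Rightarrow> real) \<Rightarrow>
   (real \<Rightarrow> real \<Rightarrow> real \<Rightarrow> real) \<Rightarrow> bool" where
  "point_transformation T X U \<longleftrightarrow> smooth3 T \<and> smooth3 X \<and> smooth3 U \<and>
     (\<forall>t x u.
        pt T t x u * (px X t x u * pu U t x u - pu X t x u * px U t x u)
      - px T t x u * (pt X t x u * pu U t x u - pu X t x u * pt U t x u)
      + pu T t x u * (pt X t x u * px U t x u - px X t x u * pt U t x u) \<noteq> 0)"

text \<open>Total derivatives of F(t,x,u) at the first-order jet (t,x,u,p,q), p = u_t, q = u_x.\<close>
definition Dt1 :: "(real \<Rightarrow> real \<Rightarrow> real \<Rightarrow> real) \<Rightarrow> real \<Rightarrow> real \<Rightarrow> real \<Rightarrow> real \<Rightarrow> real \<Rightarrow> real" where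
  "Dt1 F t x u p q = pt F t x u + p * pu F t x u"
definition Dx1 :: "(real \<Rightarrow> real \<Rightarrow> real \<Rightarrow> real) \<Rightarrow> real \<Rightarrow> real \<Rightarrow> real \<Rightarrow> real \<Rightarrow> real \<Rightarrow> real" where
  "Dx1 F t x u p q = px F t x u + q * pu F t x u"

text \<open>Total derivatives of a first-order differential function G(t,x,u,p,q) at the
  second-order jet (t,x,u,p,q,r,s,w), r = u_tt, s = u_tx, w = u_xx.\<close>
definition TDt :: "(real \<Rightarrow> real \<Rightarrow> real \<Rightarrow> real \<Rightarrow> real \<Rightarrow> real) \<Rightarrow>
    real \<Rightarrow> real \<Rightarrow> real \<Rightarrow> real \<Rightarrow> real \<Rightarrow> real \<Rightarrow> real \<Rightarrow> real \<Rightarrow> real" where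
  "TDt G t x u p q r s w =
     deriv (\<lambda>a. G a x u p q) t + p * deriv (\<lambda>a. G t x a p q) u
   + r * deriv (\<lambda>a. G t x u a q) p + s * deriv (\<lambda>a. G t x u p a) q"
definition TDx :: "(real \<Rightarrow> real \<Rightarrow> real \<Rightarrow> real \<Rightarrow> real \<Rightarrow> real) \<Rightarrow>
    real \<Rightarrow> real \<Rightarrow> real \<Rightarrow> real \<Rightarrow> real \<Rightarrow> real \<Rightarrow> real \<Rightarrow> real \<Rightarrow> real" where
  "TDx G t x u p q r s w =
     deriv (\<lambda>a. G t a u p q) x + q * deriv (\<lambda>a. G t x a p q) u
   + s * deriv (\<lambda>a. G t x u a q) p + w * deriv (\<lambda>a. G t x u p a) q"

definition jacD :: "(real \<Rightarrow> real \<Rightarrow> real \<Rightarrow> real) \<Rightarrow> (real \<Rightarrow> real \<Rightarrow> real \<Rightarrow> real) \<Rightarrow>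
    real \<Rightarrow> real \<Rightarrow> real \<Rightarrow> real \<Rightarrow> real \<Rightarrow> real" where
  "jacD T X t x u p q = Dt1 T t x u p q * Dx1 X t x u p q - Dx1 T t x u p q * Dt1 X t x u p q"

definition newUt :: "(real \<Rightarrow> real \<Rightarrow> real \<Rightarrow> real) \<Rightarrow> (real \<Rightarrow> real \<Rightarrow> real \<Rightarrow> real) \<Rightarrow>
    (real \<Rightarrow> real \<Rightarrow> real \<Rightarrow> real) \<Rightarrow> real \<Rightarrow> real \<Rightarrow> real \<Rightarrow> real \<Rightarrow> real \<Rightarrow> real" where
  "newUt T X U t x u p q =
     (Dt1 U t x u p q * Dx1 X t x u p q - Dx1 U t x u p q * Dt1 X t x u p q) / jacD T X t x u p q"
definition newUx :: "(real \<Rightarrow> real \<Rightarrow> real \<Rightarrow> real) \<Rightarrow> (real \<Rightarrow> real \<Rightarrow> real \<Rightarrow> real) \<Rightarrow>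
    (real \<Rightarrow> real \<Rightarrow> real \<Rightarrow> real) \<Rightarrow> real \<Rightarrow> real \<Rightarrow> real \<Rightarrow> real \<Rightarrow> real \<Rightarrow> real" where
  "newUx T X U t x u p q =
     (Dt1 T t x u p q * Dx1 U t x u p q - Dx1 T t x u p q * Dt1 U t x u p q) / jacD T X t x u p q"

text \<open>Transformed second derivative u~_x~x~ as a function of the second-order jet
  (solving D_t(u~_x~) = u~_t~x~ D_t T + u~_x~x~ D_t X, D_x(u~_x~) = u~_t~x~ D_x T + u~_x~x~ D_x X).\<close>
definition newUxx :: "(real \<Rightarrow> real \<Rightarrow> real \<Rightarrow> real) \<Rightarrow> (real \<Rightarrow> real \<Rightarrow> real \<Rightarrow> real) \<Rightarrow>
    (real \<Rightarrow> real \<Rightarrow> real \<Rightarrow> real) \<Rightarrow>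
    real \<Rightarrow> real \<Rightarrow> real \<Rightarrow> real \<Rightarrow> real \<Rightarrow> real \<Rightarrow> real \<Rightarrow> real \<Rightarrow> real" where
  "newUxx T X U t x u p q r s w =
     (Dt1 T t x u p q * TDx (newUx T X U) t x u p q r s w
    - Dx1 T t x u p q * TDt (newUx T X U) t x u p q r s w) / jacD T X t x u p q"

text \<open>The point transformation (T,X,U) maps the equation with arbitrary elements (A1,A2)
  to the equation with arbitrary elements (B1,B2): its second prolongation maps every
  (transversal) point of the equation manifold
  p + u q = A2(t,x) w + A1(t,x) q  (p=u_t, q=u_x, w=u_xx; r=u_tt, s=u_tx free)
  to a point of the target equation manifold.\<close>
definition maps_equation ::
  "(real \<Rightarrow> real \<Rightarrow> real \<Rightarrow> real) \<Rightarrow> (real \<Rightarrow> real \<Rightarrow> real \<Rightarrow> real) \<Rightarrow>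
   (real \<Rightarrow> real \<Rightarrow> real \<Rightarrow> real) \<Rightarrow>
   (real \<Rightarrow> real \<Rightarrow> real) \<Rightarrow> (real \<Rightarrow> real \<Rightarrow> real) \<Rightarrow>
   (real \<Rightarrow> real \<Rightarrow> real) \<Rightarrow> (real \<Rightarrow> real \<Rightarrow> real) \<Rightarrow> bool" where
  "maps_equation T X U A1 A2 B1 B2 \<longleftrightarrow>
     (\<forall>t x u p q r s w.
        jacD T X t x u p q \<noteq> 0 \<longrightarrow>
        p + u * q = A2 t x * w + A1 t x * q \<longrightarrow>
        newUt T X U t x u p q + U t x u * newUx T X U t x u p q
          = B2 (T t x u) (X t x u) * newUxx T X U t x u p q r s w
          + B1 (T t x u) (X t x u) * newUx T X U t x u p q)"

end

theory Submission
  imports Defs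
begin

lemma smooth3_D:
  assumes "smooth3 F"
  shows "smooth3 (pt F)" "smooth3 (px F)" "smooth3 (pu F)"
    "\<And>z. (\<lambda>(t, x, u). F t x u) differentiable (at z)"
  using assms by (auto elim: smooth3.cases)

lemma smooth3_pt:
  assumes "smooth3 F"
  shows "((\<lambda>a. F a x u) has_real_derivative pt F t x u) (at t)"
proof -
  have d: "(\<lambda>(t, x, u). F t x u) differentiable (at (t,x,u))" using smooth3_D(4)[OF assms] .
  have h: "(\<lambda>a::real. (a, x, u)) differentiable (at t)"
    by (intro derivative_intros)
  have "((\<lambda>(t, x, u). F t x u) \<circ> (\<lambda>a. (a, x, u))) differentiable (at t)"
    by (rule differentiable_chain_at[OF h d])
  hence "(\<lambda>a. F a x u) differentiable (at t)" by (simp add: o_def)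
  thus ?thesis unfolding pt_def using DERIV_deriv_iff_real_differentiable by blast
qed

lemma smooth3_px:
  assumes "smooth3 F"
  shows "((\<lambda>a. F t a u) has_real_derivative px F t x u) (at x)"
proof -
  have d: "(\<lambda>(t, x, u). F t x u) differentiable (at (t,x,u))" using smooth3_D(4)[OF assms] .
  have h: "(\<lambda>a::real. (t, a, u)) differentiable (at x)"
    by (intro derivative_intros)
  have "((\<lambda>(t, x, u). F t x u) \<circ> (\<lambda>a. (t, a, u))) differentiable (at x)"
    by (rule differentiable_chain_at[OF h d])
  hence "(\<lambda>a. F t a u) differentiable (at x)" by (simp add: o_def)
  thus ?thesis unfolding px_def using DERIV_deriv_iff_real_differentiable by blast
qed

lemma smooth3_pu:
  assumes "smooth3 F"
  shows "((\<lambda>a. F t x a) has_real_derivative pu F t x u) (at u)"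
proof -
  have d: "(\<lambda>(t, x, u). F t x u) differentiable (at (t,x,u))" using smooth3_D(4)[OF assms] .
  have h: "(\<lambda>a::real. (t, x, a)) differentiable (at u)"
    by (intro derivative_intros)
  have "((\<lambda>(t, x, u). F t x u) \<circ> (\<lambda>a. (t, x, a))) differentiable (at u)"
    by (rule differentiable_chain_at[OF h d])
  hence "(\<lambda>a. F t x a) differentiable (at u)" by (simp add: o_def)
  thus ?thesis unfolding pu_def using DERIV_deriv_iff_real_differentiable by blast
qed

lemma smooth3_smooth1:
  assumes "smooth3 F"
  shows "smooth1 (\<lambda>t. F t x u)"
proof -
  have "\<exists>F. smooth3 F \<and> f = (\<lambda>t. F t x u)" if "f = (\<lambda>t. F t x u)" for f
    using assms that by blast
  then show ?thesis
  proof (coinduction arbitrary: F)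
    case smooth1
    then obtain G where G: "smooth3 G" "(\<lambda>t. F t x u) = (\<lambda>t. G t x u)" by blast
    have "\<forall>t. (\<lambda>t. F t x u) differentiable (at t)"
      using G smooth3_pt[OF G(1)] real_differentiable_def by metis
    moreover have "deriv (\<lambda>t. F t x u) = (\<lambda>t. pt G t x u)"
      using G unfolding pt_def by simp
    ultimately show ?case using smooth3_D(1)[OF G(1)] by blast
  qed
qed

lemma smooth1_D:
  assumes "smooth1 f"
  shows "smooth1 (deriv f)" "(f has_real_derivative deriv f t) (at t)"
  using assms DERIV_deriv_iff_real_differentiable by (auto elim: smooth1.cases)

locale form =
  fixes tau X0 U0 U1 :: "real \<Rightarrow> real"
  assumes s: "smooth1 tau" "smooth1 X0" "smooth1 U0" "smooth1 U1"
    and nz: "\<And>t. deriv tau t * U1 t \<noteq> 0"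
begin

definition "TT = (\<lambda>(t::real) (x::real) (u::real). tau t)"
definition "XX = (\<lambda>t x (u::real). deriv tau t * U1 t * x + X0 t)"
definition "UU = (\<lambda>t x u. U1 t * u - deriv U1 t * x + U0 t)"
definition "cc t x = deriv (\<lambda>s. deriv tau s * U1 s) t * x + deriv X0 t"

lemma d1: "(tau has_real_derivative deriv tau t) (at t)"
  "(deriv tau has_real_derivative deriv (deriv tau) t) (at t)"
  "(X0 has_real_derivative deriv X0 t) (at t)"
  "(U0 has_real_derivative deriv U0 t) (at t)"
  "(U1 has_real_derivative deriv U1 t) (at t)"
  "(deriv U1 has_real_derivative deriv (deriv U1) t) (at t)"
  using s smooth1_D by blast+

lemma tau_nz: "deriv tau t \<noteq> 0" and U1_nz: "U1 t \<noteq> 0" using nz[of t] by auto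

lemma pT: "pt TT t x u = deriv tau t" "px TT t x u = 0" "pu TT t x u = 0"
  unfolding TT_def pt_def px_def pu_def by auto

lemma ccd: "deriv (\<lambda>s. deriv tau s * U1 s) t = deriv (deriv tau) t * U1 t + deriv tau t * deriv U1 t"
  by (rule DERIV_imp_deriv) (auto intro!: derivative_eq_intros d1)

lemma pX: "pt XX t x u = cc t x" "px XX t x u = deriv tau t * U1 t" "pu XX t x u = 0"
proof -
  have "((\<lambda>a. deriv tau a * U1 a * x + X0 a) has_real_derivative cc t x) (at t)"
    unfolding cc_def ccd by (auto intro!: derivative_eq_intros d1)
  thus "pt XX t x u = cc t x" unfolding XX_def pt_def by (simp add: DERIV_imp_deriv)
  have "((\<lambda>a. deriv tau t * U1 t * a + X0 t) has_real_derivative deriv tau t * U1 t) (at x)"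
    by (auto intro!: derivative_eq_intros)
  thus "px XX t x u = deriv tau t * U1 t" unfolding XX_def px_def by (simp add: DERIV_imp_deriv)
  show "pu XX t x u = 0" unfolding XX_def pu_def by simp
qed

lemma pU: "pt UU t x u = deriv U1 t * u - deriv (deriv U1) t * x + deriv U0 t"
   "px UU t x u = - deriv U1 t" "pu UU t x u = U1 t"
proof -
  have "((\<lambda>a. U1 a * u - deriv U1 a * x + U0 a) has_real_derivative
      deriv U1 t * u - deriv (deriv U1) t * x + deriv U0 t) (at t)"
    by (auto intro!: derivative_eq_intros d1)
  thus "pt UU t x u = deriv U1 t * u - deriv (deriv U1) t * x + deriv U0 t"
    unfolding UU_def pt_def by (simp add: DERIV_imp_deriv)
  have "((\<lambda>a. U1 t * u - deriv U1 t * a + U0 t) has_real_derivative - deriv U1 t) (at x)"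
    by (auto intro!: derivative_eq_intros)
  thus "px UU t x u = - deriv U1 t" unfolding UU_def px_def by (simp add: DERIV_imp_deriv)
  have "((\<lambda>a. U1 t * a - deriv U1 t * x + U0 t) has_real_derivative U1 t) (at u)"
    by (auto intro!: derivative_eq_intros)
  thus "pu UU t x u = U1 t" unfolding UU_def pu_def by (simp add: DERIV_imp_deriv)
qed

lemma jac: "jacD TT XX t x u p q = deriv tau t * (deriv tau t * U1 t)"
  unfolding jacD_def Dt1_def Dx1_def pT pX pU by simp

lemma nUx_fun: "newUx TT XX UU = (\<lambda>t x u p q. (q * U1 t - deriv U1 t) / (deriv tau t * U1 t))"
  using tau_nz U1_nz
  by (intro ext) (simp add: newUx_def jac Dt1_def Dx1_def pT pX pU field_simps)

lemma nUt: "newUt TT XX UU t x u p q =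
   ((deriv U1 t * u - deriv (deriv U1) t * x + deriv U0 t + p * U1 t) * (deriv tau t * U1 t)
    - (q * U1 t - deriv U1 t) * cc t x) / (deriv tau t * (deriv tau t * U1 t))"
  by (simp add: newUt_def jac Dt1_def Dx1_def pT pX pU algebra_simps)

lemma nUxx: "newUxx TT XX UU t x u p q r s w = w / (deriv tau t * (deriv tau t * U1 t))"
proof -
  have "((\<lambda>a. (a * U1 t - deriv U1 t) / (deriv tau t * U1 t)) has_real_derivative
     1 / deriv tau t) (at q)"
    using tau_nz U1_nz by (auto intro!: derivative_eq_intros simp: field_simps)
  hence "TDx (newUx TT XX UU) t x u p q r s w = w / deriv tau t"
    unfolding TDx_def nUx_fun by (simp add: DERIV_imp_deriv)
  thus ?thesis unfolding newUxx_def jac Dt1_def Dx1_def pT using tau_nz U1_nz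
    by (simp add: field_simps)
qed

definition "NN A1 A2 b1 b2 t x u q w =
  (deriv U1 t * u - deriv (deriv U1) t * x + deriv U0 t + (A2 * w + (A1 - u) * q) * U1 t) * (deriv tau t * U1 t)
    - (q * U1 t - deriv U1 t) * cc t x
  + deriv tau t * (U1 t * u - deriv U1 t * x + U0 t - b1) * (q * U1 t - deriv U1 t) - b2 * w"

lemma maps_iff:
  "maps_equation TT XX UU A1 A2 B1 B2 \<longleftrightarrow>
   (\<forall>t x u q w. NN (A1 t x) (A2 t x) (B1 (tau t) (XX t x u)) (B2 (tau t) (XX t x u)) t x u q w = 0)"
proof -
  have key: "newUt TT XX UU t x u p q + UU t x u * newUx TT XX UU t x u p q
      = b2 * newUxx TT XX UU t x u p q r s w + b1 * newUx TT XX UU t x u p q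
     \<longleftrightarrow> NN a1 a2 b1 b2 t x u q w = 0"
    if "p + u * q = a2 * w + a1 * q" for t x u p q r s w a1 a2 b1 b2
  proof -
    have p: "p = a2 * w + (a1 - u) * q" using that by (simp add: algebra_simps)
    let ?D = "deriv tau t * (deriv tau t * U1 t)"
    have D: "?D \<noteq> 0" using tau_nz[of t] U1_nz[of t] by simp
    have ux: "newUx TT XX UU t x u p q * ?D = (q * U1 t - deriv U1 t) * deriv tau t"
      unfolding nUx_fun using tau_nz[of t] U1_nz[of t] by (simp add: field_simps)
    have ut: "newUt TT XX UU t x u p q * ?D = (deriv U1 t * u - deriv (deriv U1) t * x + deriv U0 t + p * U1 t) * (deriv tau t * U1 t)
    - (q * U1 t - deriv U1 t) * cc t x" unfolding nUt using D by simp
    have uxx: "newUxx TT XX UU t x u p q r s w * ?D = w" unfolding nUxx using D by simp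
    have "(newUt TT XX UU t x u p q + UU t x u * newUx TT XX UU t x u p q
      - (b2 * newUxx TT XX UU t x u p q r s w + b1 * newUx TT XX UU t x u p q)) * ?D
      = newUt TT XX UU t x u p q * ?D + UU t x u * (newUx TT XX UU t x u p q * ?D)
        - b2 * (newUxx TT XX UU t x u p q r s w * ?D) - b1 * (newUx TT XX UU t x u p q * ?D)"
      by (simp add: algebra_simps)
    also have "\<dots> = NN a1 a2 b1 b2 t x u q w"
      unfolding ut ux uxx unfolding NN_def p UU_def by (simp add: algebra_simps)
    finally have "(newUt TT XX UU t x u p q + UU t x u * newUx TT XX UU t x u p q
      - (b2 * newUxx TT XX UU t x u p q r s w + b1 * newUx TT XX UU t x u p q)) * ?D
      = NN a1 a2 b1 b2 t x u q w" .
    thus ?thesis using D by (metis mult_eq_0_iff right_minus_eq)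
  qed
  show ?thesis
  proof
    assume m: "maps_equation TT XX UU A1 A2 B1 B2"
    show "\<forall>t x u q w. NN (A1 t x) (A2 t x) (B1 (tau t) (XX t x u)) (B2 (tau t) (XX t x u)) t x u q w = 0"
    proof (intro allI)
      fix t x u q w
      let ?p = "A2 t x * w + (A1 t x - u) * q"
      have "?p + u * q = A2 t x * w + A1 t x * q" by (simp add: algebra_simps)
      moreover have "jacD TT XX t x u ?p q \<noteq> 0" unfolding jac using tau_nz[of t] U1_nz[of t] by simp
      ultimately have "newUt TT XX UU t x u ?p q + UU t x u * newUx TT XX UU t x u ?p q
          = B2 (TT t x u) (XX t x u) * newUxx TT XX UU t x u ?p q 0 0 w
          + B1 (TT t x u) (XX t x u) * newUx TT XX UU t x u ?p q"
        using m unfolding maps_equation_def by blast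
      moreover have "TT t x u = tau t" by (simp add: TT_def)
      moreover have "(newUt TT XX UU t x u ?p q + UU t x u * newUx TT XX UU t x u ?p q
          = B2 (tau t) (XX t x u) * newUxx TT XX UU t x u ?p q 0 0 w
          + B1 (tau t) (XX t x u) * newUx TT XX UU t x u ?p q) \<longleftrightarrow>
          NN (A1 t x) (A2 t x) (B1 (tau t) (XX t x u)) (B2 (tau t) (XX t x u)) t x u q w = 0"
        by (rule key) (simp add: algebra_simps)
      ultimately show "NN (A1 t x) (A2 t x) (B1 (tau t) (XX t x u)) (B2 (tau t) (XX t x u)) t x u q w = 0"
        by simp
    qed
  next
    assume "\<forall>t x u q w. NN (A1 t x) (A2 t x) (B1 (tau t) (XX t x u)) (B2 (tau t) (XX t x u)) t x u q w = 0"
    thus "maps_equation TT XX UU A1 A2 B1 B2"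
      unfolding maps_equation_def
    proof (intro allI impI)
      fix t x u p q r s w
      assume "p + u * q = A2 t x * w + A1 t x * q"
      hence "(newUt TT XX UU t x u p q + UU t x u * newUx TT XX UU t x u p q
          = B2 (tau t) (XX t x u) * newUxx TT XX UU t x u p q r s w
          + B1 (tau t) (XX t x u) * newUx TT XX UU t x u p q) \<longleftrightarrow>
          NN (A1 t x) (A2 t x) (B1 (tau t) (XX t x u)) (B2 (tau t) (XX t x u)) t x u q w = 0"
        by (rule key)
      moreover have "TT t x u = tau t" by (simp add: TT_def)
      ultimately show "newUt TT XX UU t x u p q + UU t x u * newUx TT XX UU t x u p q
          = B2 (TT t x u) (XX t x u) * newUxx TT XX UU t x u p q r s w
          + B1 (TT t x u) (XX t x u) * newUx TT XX UU t x u p q"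
        using \<open>\<forall>t x u q w. _\<close> by simp
    qed
  qed
qed

lemma NN_iff:
  "(\<forall>t x u q w. NN (A1 t x) (A2 t x) (B1 (tau t) (XX t x u)) (B2 (tau t) (XX t x u)) t x u q w = 0)
   \<longleftrightarrow>
   ((\<forall>t x. deriv (deriv U1) t * x - deriv U0 t = A1 t x * deriv U1 t) \<and>
    (\<forall>t x. B1 (tau t) (deriv tau t * U1 t * x + X0 t)
                = U1 t * A1 t x - deriv U1 t * x + U0 t
                  - (deriv (\<lambda>s. deriv tau s * U1 s) t * x + deriv X0 t) / deriv tau t) \<and>
    (\<forall>t x. B2 (tau t) (deriv tau t * U1 t * x + X0 t)
                = deriv tau t * (U1 t)\<^sup>2 * A2 t x))"
  (is "?L \<longleftrightarrow> ?R")
proof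
  assume L: ?L
  have X: "XX t x u = deriv tau t * U1 t * x + X0 t" for t x u by (simp add: XX_def)
  have c3: "B2 (tau t) (deriv tau t * U1 t * x + X0 t) = deriv tau t * (U1 t)\<^sup>2 * A2 t x" for t x
  proof -
    have "NN (A1 t x) (A2 t x) (B1 (tau t) (XX t x 0)) (B2 (tau t) (XX t x 0)) t x 0 0 1
        - NN (A1 t x) (A2 t x) (B1 (tau t) (XX t x 0)) (B2 (tau t) (XX t x 0)) t x 0 0 0 = 0"
      using L by simp
    thus ?thesis unfolding NN_def X by (simp add: algebra_simps power2_eq_square)
  qed
  have c2: "B1 (tau t) (deriv tau t * U1 t * x + X0 t)
                = U1 t * A1 t x - deriv U1 t * x + U0 t
                  - (deriv (\<lambda>s. deriv tau s * U1 s) t * x + deriv X0 t) / deriv tau t" for t x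
  proof -
    have "NN (A1 t x) (A2 t x) (B1 (tau t) (XX t x 0)) (B2 (tau t) (XX t x 0)) t x 0 1 0
        - NN (A1 t x) (A2 t x) (B1 (tau t) (XX t x 0)) (B2 (tau t) (XX t x 0)) t x 0 0 0 = 0"
      using L by simp
    hence "U1 t * (A1 t x * deriv tau t * U1 t - cc t x + deriv tau t * (- deriv U1 t * x + U0 t
       - B1 (tau t) (deriv tau t * U1 t * x + X0 t))) = 0"
      unfolding NN_def X by (simp add: algebra_simps)
    hence "A1 t x * deriv tau t * U1 t - cc t x + deriv tau t * (- deriv U1 t * x + U0 t
       - B1 (tau t) (deriv tau t * U1 t * x + X0 t)) = 0" using U1_nz[of t] by simp
    thus ?thesis using tau_nz[of t] unfolding cc_def by (simp add: field_simps)
  qed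
  have c1: "deriv (deriv U1) t * x - deriv U0 t = A1 t x * deriv U1 t" for t x
  proof -
    have "NN (A1 t x) (A2 t x) (B1 (tau t) (XX t x 0)) (B2 (tau t) (XX t x 0)) t x 0 0 0 = 0"
      using L by simp
    hence "deriv tau t * deriv tau t * U1 t * (- deriv (deriv U1) t * x + deriv U0 t + A1 t x * deriv U1 t) = 0"
      unfolding NN_def X c2 using tau_nz[of t] unfolding cc_def by (simp add: field_simps)
    hence "- deriv (deriv U1) t * x + deriv U0 t + A1 t x * deriv U1 t = 0"
      using tau_nz[of t] U1_nz[of t] by simp
    thus ?thesis by (simp add: algebra_simps)
  qed
  show ?R using c1 c2 c3 by blast
next
  assume R: ?R
  show ?L
  proof (intro allI)
    fix t x u q w
    have X: "XX t x u = deriv tau t * U1 t * x + X0 t" by (simp add: XX_def)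
    have e: "deriv U0 t = deriv (deriv U1) t * x - A1 t x * deriv U1 t" using R by (simp add: algebra_simps)
    show "NN (A1 t x) (A2 t x) (B1 (tau t) (XX t x u)) (B2 (tau t) (XX t x u)) t x u q w = 0"
    proof -
      have b1: "B1 (tau t) (deriv tau t * U1 t * x + X0 t) = U1 t * A1 t x - deriv U1 t * x + U0 t - cc t x / deriv tau t"
        using R unfolding cc_def by blast
      have b2: "B2 (tau t) (deriv tau t * U1 t * x + X0 t) = deriv tau t * (U1 t)\<^sup>2 * A2 t x"
        using R by blast
      show ?thesis unfolding NN_def X b1 b2 e using tau_nz[of t]
        by (simp add: field_simps power2_eq_square)
    qed
  qed
qed

end

definition JJ :: "(real \<Rightarrow> real \<Rightarrow> real \<Rightarrow> real) \<Rightarrow> (real \<Rightarrow> real \<Rightarrow> real \<Rightarrow> real) \<Rightarrow>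
   (real \<Rightarrow> real \<Rightarrow> real \<Rightarrow> real) \<Rightarrow> real \<Rightarrow> real \<Rightarrow> real \<Rightarrow> real" where
  "JJ T X U t x u =
        pt T t x u * (px X t x u * pu U t x u - pu X t x u * px U t x u)
      - px T t x u * (pt X t x u * pu U t x u - pu X t x u * pt U t x u)
      + pu T t x u * (pt X t x u * px U t x u - px X t x u * pt U t x u)"

lemma dp_generic:
  fixes Tt Tx Tu Xt Xx Xu Ut Ux Uu p q :: real
  assumes J: "(Tt + p*Tu) * (Xx + q*Xu) - (Tx + q*Tu) * (Xt + p*Xu) \<noteq> 0"
  shows "((\<lambda>a. ((Tt + a*Tu) * (Ux + q*Uu) - (Tx + q*Tu) * (Ut + a*Uu)) /
       ((Tt + a*Tu) * (Xx + q*Xu) - (Tx + q*Tu) * (Xt + a*Xu))) has_real_derivative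
     - (Tx + q*Tu) * (Tt * (Xx * Uu - Xu * Ux) - Tx * (Xt * Uu - Xu * Ut) + Tu * (Xt * Ux - Xx * Ut))
     / ((Tt + p*Tu) * (Xx + q*Xu) - (Tx + q*Tu) * (Xt + p*Xu))\<^sup>2) (at p)"
proof -
  have e: "(Tu * (Ux + q*Uu) - (Tx + q*Tu) * Uu) * ((Tt + p*Tu) * (Xx + q*Xu) - (Tx + q*Tu) * (Xt + p*Xu))
   - ((Tt + p*Tu) * (Ux + q*Uu) - (Tx + q*Tu) * (Ut + p*Uu)) * (Tu * (Xx + q*Xu) - (Tx + q*Tu) * Xu)
   = - (Tx + q*Tu) * (Tt * (Xx * Uu - Xu * Ux) - Tx * (Xt * Uu - Xu * Ut) + Tu * (Xt * Ux - Xx * Ut))"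
    by (simp add: algebra_simps)
  have dN: "((\<lambda>a. (Tt + a*Tu) * (Ux + q*Uu) - (Tx + q*Tu) * (Ut + a*Uu)) has_real_derivative
     Tu * (Ux + q*Uu) - (Tx + q*Tu) * Uu) (at p)"
    by (auto intro!: derivative_eq_intros)
  have dD: "((\<lambda>a. (Tt + a*Tu) * (Xx + q*Xu) - (Tx + q*Tu) * (Xt + a*Xu)) has_real_derivative
     Tu * (Xx + q*Xu) - (Tx + q*Tu) * Xu) (at p)"
    by (auto intro!: derivative_eq_intros)
  show ?thesis
    using DERIV_divide[OF dN dD J] unfolding e power2_eq_square .
qed

lemma dpnUx:
  assumes "jacD T X t x u p q \<noteq> 0"
  shows "deriv (\<lambda>a. newUx T X U t x u a q) p = - Dx1 T t x u p q * JJ T X U t x u / (jacD T X t x u p q)\<^sup>2"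
  apply (rule DERIV_imp_deriv)
  using assms unfolding newUx_def jacD_def Dt1_def Dx1_def JJ_def
  by (rule dp_generic)

lemma gen_diff: fixes a b c d e J :: real shows
  "(a * c - b * (d + e)) / J - (a * c - b * d) / J = - b * e / J"
  by (simp add: diff_divide_distrib[symmetric] algebra_simps)

lemma JJ_generic: fixes Tt Tx Tu Xt Xx Xu Ut Ux Uu :: real shows
  "Tt * (Xx * Uu - Xu * Ux) - Tx * (Xt * Uu - Xu * Ut) + Tu * (Xt * Ux - Xx * Ut)
   = Uu * (Tt * Xx - Tx * Xt) - Ux * (Tt * Xu - Tu * Xt) - Ut * (Tu * Xx - Tx * Xu)"
  by (simp add: algebra_simps)

lemma jac_affine: "jacD T X t x u p q =
   (pt T t x u * px X t x u - px T t x u * pt X t x u)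
  + p * (pu T t x u * px X t x u - px T t x u * pu X t x u)
  + q * (pt T t x u * pu X t x u - pu T t x u * pt X t x u)"
  unfolding jacD_def Dt1_def Dx1_def by (simp add: algebra_simps)

lemma two_q_generic:
  fixes al be ga Tx Tu :: real
  assumes g: "\<And>p q. al + p * be + q * ga \<noteq> 0 \<Longrightarrow> Tx + q * Tu = 0"
    and nz: "al \<noteq> 0 \<or> be \<noteq> 0 \<or> ga \<noteq> 0"
  shows "Tx = 0 \<and> Tu = 0"
proof -
  obtain q1 q2 where q: "q1 \<noteq> q2" "Tx + q1 * Tu = 0" "Tx + q2 * Tu = 0"
  proof (cases "be \<noteq> 0")
    case True
    have "al + ((1 - al - q * ga) / be) * be + q * ga \<noteq> 0" for q
      using True by simp
    then show ?thesis using that[of 0 1] g[of "(1 - al - 0 * ga) / be" 0] g[of "(1 - al - 1 * ga) / be" 1] True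
      by simp
  next
    case False
    hence b0: "be = 0" by simp
    show ?thesis
    proof (cases "ga = 0")
      case True
      then show ?thesis using that[of 0 1] g[of 0 0] g[of 0 1] nz b0 by simp
    next
      case False
      have h1: "al + 0 * be + (- al / ga + 1) * ga \<noteq> 0" "al + 0 * be + (- al / ga + 2) * ga \<noteq> 0"
        using False b0 by (simp_all add: field_simps)
      show ?thesis
        by (rule that[of "- al / ga + 1" "- al / ga + 2"]) (simp, rule g[OF h1(1)], rule g[OF h1(2)])
    qed
  qed
  have "(q1 - q2) * Tu = (Tx + q1 * Tu) - (Tx + q2 * Tu)" by (simp add: algebra_simps)
  hence "(q1 - q2) * Tu = 0" using q by simp
  hence "Tu = 0" using q(1) by simp
  thus ?thesis using q by simp
qed

locale setting =
  fixes A1 A2 B1 B2 :: "real \<Rightarrow> real \<Rightarrow> real"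
    and T X U :: "real \<Rightarrow> real \<Rightarrow> real \<Rightarrow> real"
  assumes cA: "in_class_L A1 A2"
    and cB: "in_class_L B1 B2"
    and pt: "point_transformation T X U"
    and me: "maps_equation T X U A1 A2 B1 B2"
begin

lemma sT: "smooth3 T" and sX: "smooth3 X" and sU: "smooth3 U"
  using pt unfolding point_transformation_def by auto
lemma JJnz: "JJ T X U t x u \<noteq> 0"
  using pt unfolding point_transformation_def JJ_def by auto
lemma A2nz: "A2 t x \<noteq> 0" using cA unfolding in_class_L_def by auto
lemma B2nz: "B2 t x \<noteq> 0" using cB unfolding in_class_L_def by auto

lemma eqn:
  assumes "jacD T X t x u p q \<noteq> 0" "p + u * q = A2 t x * w + A1 t x * q"
  shows "newUt T X U t x u p q + U t x u * newUx T X U t x u p q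
          = B2 (T t x u) (X t x u) * newUxx T X U t x u p q r s w
          + B1 (T t x u) (X t x u) * newUx T X U t x u p q"
  using me assms unfolding maps_equation_def by blast

lemma r_coeff:
  assumes J: "jacD T X t x u p q \<noteq> 0"
  shows "Dx1 T t x u p q = 0"
proof -
  define w where "w = (p - (A1 t x - u) * q) / A2 t x"
  have pw: "p + u * q = A2 t x * w + A1 t x * q"
    unfolding w_def using A2nz[of t x] by (simp add: field_simps)
  note e1 = eqn[OF J pw, of 1 0]
  note e0 = eqn[OF J pw, of 0 0]
  have "B2 (T t x u) (X t x u) * newUxx T X U t x u p q 1 0 w = B2 (T t x u) (X t x u) * newUxx T X U t x u p q 0 0 w"
    using e1 e0 by linarith
  hence "B2 (T t x u) (X t x u) * (newUxx T X U t x u p q 1 0 w - newUxx T X U t x u p q 0 0 w) = 0"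
    by (simp add: right_diff_distrib)
  hence "newUxx T X U t x u p q 1 0 w - newUxx T X U t x u p q 0 0 w = 0" using B2nz by simp
  moreover have "newUxx T X U t x u p q 1 0 w - newUxx T X U t x u p q 0 0 w
     = - Dx1 T t x u p q * deriv (\<lambda>a. newUx T X U t x u a q) p / jacD T X t x u p q"
  proof -
    have "TDt (newUx T X U) t x u p q 1 0 w = TDt (newUx T X U) t x u p q 0 0 w + deriv (\<lambda>a. newUx T X U t x u a q) p"
      unfolding TDt_def by simp
    moreover have "TDx (newUx T X U) t x u p q 1 0 w = TDx (newUx T X U) t x u p q 0 0 w"
      unfolding TDx_def by simp
    ultimately show ?thesis unfolding newUxx_def by (simp add: gen_diff)
  qed
  ultimately have "Dx1 T t x u p q * deriv (\<lambda>a. newUx T X U t x u a q) p = 0" using J by simp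
  hence "Dx1 T t x u p q * (Dx1 T t x u p q * JJ T X U t x u / (jacD T X t x u p q)\<^sup>2) = 0"
    unfolding dpnUx[OF J] by simp
  thus ?thesis using J JJnz by simp
qed

lemma Tx_Tu: "px T t x u = 0 \<and> pu T t x u = 0"
proof (rule two_q_generic)
  show "px T t x u + q * pu T t x u = 0" if
    "(pt T t x u * px X t x u - px T t x u * pt X t x u) + p * (pu T t x u * px X t x u - px T t x u * pu X t x u)
      + q * (pt T t x u * pu X t x u - pu T t x u * pt X t x u) \<noteq> 0" for p q
    using r_coeff[of t x u p q] that unfolding jac_affine Dx1_def by simp
  show "(pt T t x u * px X t x u - px T t x u * pt X t x u) \<noteq> 0 \<or>
     (pu T t x u * px X t x u - px T t x u * pu X t x u) \<noteq> 0 \<or>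
     (pt T t x u * pu X t x u - pu T t x u * pt X t x u) \<noteq> 0"
    using JJnz[of t x u] unfolding JJ_def JJ_generic by auto
qed

end

definition Egen :: "real \<Rightarrow> real \<Rightarrow> real \<Rightarrow> real \<Rightarrow> real \<Rightarrow> real \<Rightarrow> real \<Rightarrow> real \<Rightarrow> real \<Rightarrow> real \<Rightarrow> real \<Rightarrow> real \<Rightarrow> real \<Rightarrow> real \<Rightarrow> real \<Rightarrow> real \<Rightarrow> real \<Rightarrow> real \<Rightarrow> real \<Rightarrow> real \<Rightarrow> real \<Rightarrow> real \<Rightarrow> real \<Rightarrow> real" where
  "Egen a Ut Ux Uu Xt Xx Xu Uxx Uxu Uux Uuu Xxx Xxu Xux Xuu Uv B1v B2v A1v A2v u q w =
   (let p = A2v * w + (A1v - u) * q; e = Ut + p * Uu; c = Xt + p * Xu; f = Ux + q * Uu; d = Xx + q * Xu;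
        fx = Uxx + q * Uxu; dx = Xxx + q * Xxu; fu = Uux + q * Uuu; du = Xux + q * Xuu;
        K = Uu * d - f * Xu
    in (e * d - f * c) * d^2 + a * (Uv - B1v) * f * d^2 - a * B2v * ((fx * d - f * dx) + q * (fu * d - f * du) + w * K))"

lemma Egen_from_eq:
  fixes a Ut Ux Uu Xt Xx Xu Uxx Uxu Uux Uuu Xxx Xxu Xux Xuu Uv B1v B2v A1v A2v u q w p s :: real
  defines "e \<equiv> Ut + p * Uu" and "c \<equiv> Xt + p * Xu" and "f \<equiv> Ux + q * Uu" and "d \<equiv> Xx + q * Xu"
    and "fx \<equiv> Uxx + q * Uxu" and "dx \<equiv> Xxx + q * Xxu" and "fu \<equiv> Uux + q * Uuu" and "du \<equiv> Xux + q * Xuu"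
  assumes a: "a \<noteq> 0" and d: "d \<noteq> 0" and p: "p = A2v * w + (A1v - u) * q"
    and eq: "(e * d - f * c) / (a * d) + Uv * (f / d) =
      B2v * (((fx * d - f * dx) / (d * d) + q * ((fu * d - f * du) / (d * d)) + s * 0
          + w * ((Uu * d - f * Xu) / (d * d))) / d) + B1v * (f / d)"
  shows "Egen a Ut Ux Uu Xt Xx Xu Uxx Uxu Uux Uuu Xxx Xxu Xux Xuu Uv B1v B2v A1v A2v u q w = 0"
proof -
  have "((e * d - f * c) / (a * d) + Uv * (f / d) -
      (B2v * (((fx * d - f * dx) / (d * d) + q * ((fu * d - f * du) / (d * d)) + s * 0
          + w * ((Uu * d - f * Xu) / (d * d))) / d) + B1v * (f / d))) * (a * d^3)
    = (e * d - f * c) * d^2 + a * (Uv - B1v) * f * d^2 - a * B2v * ((fx * d - f * dx) + q * (fu * d - f * du) + w * (Uu * d - f * Xu))"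
    using a d by (simp add: field_simps power3_eq_cube power2_eq_square)
  thus ?thesis using eq unfolding Egen_def Let_def p[symmetric] e_def[symmetric] c_def[symmetric]
      f_def[symmetric] d_def[symmetric] fx_def[symmetric] dx_def[symmetric] fu_def[symmetric] du_def[symmetric]
    by simp
qed

lemma Egen_w:
  "Egen a Ut Ux Uu Xt Xx Xu Uxx Uxu Uux Uuu Xxx Xxu Xux Xuu Uv B1v B2v A1v A2v u q 1
  - Egen a Ut Ux Uu Xt Xx Xu Uxx Uxu Uux Uuu Xxx Xxu Xux Xuu Uv B1v B2v A1v A2v u q 0
  = (Uu * Xx - Ux * Xu) * (A2v * (Xx + q * Xu)^2 - a * B2v)"
  unfolding Egen_def Let_def by (simp add: algebra_simps power2_eq_square)

lemma Xu_generic: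
  fixes A C Xx Xu :: real
  assumes h: "\<And>q. Xx + q * Xu \<noteq> 0 \<Longrightarrow> A * (Xx + q * Xu)^2 = C" and A: "A \<noteq> 0"
  shows "Xu = 0"
proof (rule ccontr)
  assume X: "Xu \<noteq> 0"
  have "Xx + (- Xx / Xu + 1) * Xu = Xu" "Xx + (- Xx / Xu + 2) * Xu = 2 * Xu"
    using X by (simp_all add: field_simps)
  hence "A * Xu^2 = C" "A * (2 * Xu)^2 = C" using h[of "- Xx / Xu + 1"] h[of "- Xx / Xu + 2"] X by auto
  hence "3 * (A * Xu^2) = 0" by (simp add: power2_eq_square algebra_simps)
  thus False using A X by simp
qed

context setting begin

lemma T_const: "T t x u = T t 0 0"
proof -
  have "T t x u = T t 0 u"
    by (rule DERIV_isconst_all[of "\<lambda>a. T t a u"]) (use smooth3_px[OF sT] Tx_Tu in auto)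
  also have "\<dots> = T t 0 0"
    by (rule DERIV_isconst_all[of "\<lambda>a. T t 0 a"]) (use smooth3_pu[OF sT] Tx_Tu in auto)
  finally show ?thesis .
qed

lemma ptT: "pt T t x u = deriv (\<lambda>t. T t 0 0) t"
  unfolding pt_def by (subst T_const) simp

lemma JJ_red: "JJ T X U t x u = pt T t x u * (px X t x u * pu U t x u - pu X t x u * px U t x u)"
  unfolding JJ_def using Tx_Tu by simp

lemma a_nz: "pt T t x u \<noteq> 0" and K_nz: "px X t x u * pu U t x u - pu X t x u * px U t x u \<noteq> 0"
  using JJnz[of t x u] unfolding JJ_red by auto

lemma jac_red: "jacD T X t x u p q = pt T t x u * (px X t x u + q * pu X t x u)"
  unfolding jacD_def Dt1_def Dx1_def using Tx_Tu by simp

lemma newUx_fun: "newUx T X U = (\<lambda>t x u p q. (px U t x u + q * pu U t x u) / (px X t x u + q * pu X t x u))"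
proof (intro ext)
  fix t x u p q
  show "newUx T X U t x u p q = (px U t x u + q * pu U t x u) / (px X t x u + q * pu X t x u)"
    unfolding newUx_def jac_red Dt1_def Dx1_def using Tx_Tu[of t x u] a_nz[of t x u]
    by simp
qed

lemma newUt_red: "newUt T X U t x u p q =
   ((pt U t x u + p * pu U t x u) * (px X t x u + q * pu X t x u)
    - (px U t x u + q * pu U t x u) * (pt X t x u + p * pu X t x u)) / (pt T t x u * (px X t x u + q * pu X t x u))"
  unfolding newUt_def jac_red Dt1_def Dx1_def ..

lemma sU2: "smooth3 (px U)" "smooth3 (pu U)" "smooth3 (pt U)" using smooth3_D[OF sU] by auto
lemma sX2: "smooth3 (px X)" "smooth3 (pu X)" "smooth3 (pt X)" using smooth3_D[OF sX] by auto

lemma newUxx_red: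
  assumes d: "px X t x u + q * pu X t x u \<noteq> 0"
  defines "f \<equiv> px U t x u + q * pu U t x u" and "d \<equiv> px X t x u + q * pu X t x u"
  shows "newUxx T X U t x u p q r s w =
    (((px (px U) t x u + q * px (pu U) t x u) * d - f * (px (px X) t x u + q * px (pu X) t x u)) / (d * d)
     + q * (((pu (px U) t x u + q * pu (pu U) t x u) * d - f * (pu (px X) t x u + q * pu (pu X) t x u)) / (d * d))
     + s * 0 + w * ((pu U t x u * d - f * pu X t x u) / (d * d))) / d"
proof -
  have dx: "deriv (\<lambda>b. newUx T X U t b u p q) x =
     ((px (px U) t x u + q * px (pu U) t x u) * d - f * (px (px X) t x u + q * px (pu X) t x u)) / (d * d)"
    unfolding newUx_fun f_def d_def
    by (rule DERIV_imp_deriv, rule DERIV_divide)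
       (intro DERIV_add DERIV_cmult smooth3_px sU2 sX2, intro DERIV_add DERIV_cmult smooth3_px sU2 sX2, use d in simp)
  have du: "deriv (\<lambda>b. newUx T X U t x b p q) u =
     ((pu (px U) t x u + q * pu (pu U) t x u) * d - f * (pu (px X) t x u + q * pu (pu X) t x u)) / (d * d)"
    unfolding newUx_fun f_def d_def
    by (rule DERIV_imp_deriv, rule DERIV_divide)
       (intro DERIV_add DERIV_cmult smooth3_pu sU2 sX2, intro DERIV_add DERIV_cmult smooth3_pu sU2 sX2, use d in simp)
  have dp: "deriv (\<lambda>b. newUx T X U t x u b q) p = 0"
    unfolding newUx_fun by simp
  have dq: "deriv (\<lambda>b. newUx T X U t x u p b) q = (pu U t x u * d - f * pu X t x u) / (d * d)"
  proof -
    have "((\<lambda>b. (px U t x u + b * pu U t x u) / (px X t x u + b * pu X t x u)) has_real_derivative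
      (pu U t x u * (px X t x u + q * pu X t x u) - (px U t x u + q * pu U t x u) * pu X t x u) /
       ((px X t x u + q * pu X t x u) * (px X t x u + q * pu X t x u))) (at q)"
      by (rule DERIV_divide) (auto intro!: derivative_eq_intros simp: d)
    thus ?thesis unfolding newUx_fun f_def d_def by (rule DERIV_imp_deriv)
  qed
  have "newUxx T X U t x u p q r s w = TDx (newUx T X U) t x u p q r s w / d"
    unfolding newUxx_def jac_red d_def Dt1_def Dx1_def using Tx_Tu[of t x u] a_nz[of t x u] by simp
  also have "TDx (newUx T X U) t x u p q r s w = 
    ((px (px U) t x u + q * px (pu U) t x u) * d - f * (px (px X) t x u + q * px (pu X) t x u)) / (d * d)
     + q * (((pu (px U) t x u + q * pu (pu U) t x u) * d - f * (pu (px X) t x u + q * pu (pu X) t x u)) / (d * d))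
     + s * 0 + w * ((pu U t x u * d - f * pu X t x u) / (d * d))"
    unfolding TDx_def dx du dp dq ..
  finally show ?thesis .
qed

abbreviation "EE t x u q w \<equiv> Egen (pt T t x u) (pt U t x u) (px U t x u) (pu U t x u) (pt X t x u) (px X t x u) (pu X t x u)
   (px (px U) t x u) (px (pu U) t x u) (pu (px U) t x u) (pu (pu U) t x u)
   (px (px X) t x u) (px (pu X) t x u) (pu (px X) t x u) (pu (pu X) t x u)
   (U t x u) (B1 (T t x u) (X t x u)) (B2 (T t x u) (X t x u)) (A1 t x) (A2 t x) u q w"

lemma EE_zero:
  assumes d: "px X t x u + q * pu X t x u \<noteq> 0"
  shows "EE t x u q w = 0"
proof -
  define p where "p = A2 t x * w + (A1 t x - u) * q"
  have J: "jacD T X t x u p q \<noteq> 0" unfolding jac_red using a_nz d by simp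
  have pw: "p + u * q = A2 t x * w + A1 t x * q" unfolding p_def by (simp add: algebra_simps)
  have "newUt T X U t x u p q + U t x u * newUx T X U t x u p q
          = B2 (T t x u) (X t x u) * newUxx T X U t x u p q 0 0 w
          + B1 (T t x u) (X t x u) * newUx T X U t x u p q"
    by (rule eqn[OF J pw])
  hence eq: "((pt U t x u + p * pu U t x u) * (px X t x u + q * pu X t x u)
    - (px U t x u + q * pu U t x u) * (pt X t x u + p * pu X t x u)) / (pt T t x u * (px X t x u + q * pu X t x u))
    + U t x u * ((px U t x u + q * pu U t x u) / (px X t x u + q * pu X t x u)) = 
    B2 (T t x u) (X t x u) * 
    ((((px (px U) t x u + q * px (pu U) t x u) * (px X t x u + q * pu X t x u) - (px U t x u + q * pu U t x u) * (px (px X) t x u + q * px (pu X) t x u)) / ((px X t x u + q * pu X t x u) * (px X t x u + q * pu X t x u))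
     + q * (((pu (px U) t x u + q * pu (pu U) t x u) * (px X t x u + q * pu X t x u) - (px U t x u + q * pu U t x u) * (pu (px X) t x u + q * pu (pu X) t x u)) / ((px X t x u + q * pu X t x u) * (px X t x u + q * pu X t x u)))
     + 0 * 0 + w * ((pu U t x u * (px X t x u + q * pu X t x u) - (px U t x u + q * pu U t x u) * pu X t x u) / ((px X t x u + q * pu X t x u) * (px X t x u + q * pu X t x u)))) / (px X t x u + q * pu X t x u))
    + B1 (T t x u) (X t x u) * ((px U t x u + q * pu U t x u) / (px X t x u + q * pu X t x u))"
    unfolding newUt_red newUxx_red[OF d] newUx_fun .
  show ?thesis
    by (rule Egen_from_eq[OF a_nz d p_def eq])
qed

lemma Xu_zero: "pu X t x u = 0"
proof (rule Xu_generic)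
  show "A2 t x \<noteq> 0" by (rule A2nz)
  fix q assume d: "px X t x u + q * pu X t x u \<noteq> 0"
  have "(pu U t x u * px X t x u - px U t x u * pu X t x u) *
     (A2 t x * (px X t x u + q * pu X t x u)^2 - pt T t x u * B2 (T t x u) (X t x u)) = 0"
  proof -
    have "EE t x u q 1 - EE t x u q 0 = (pu U t x u * px X t x u - px U t x u * pu X t x u) *
     (A2 t x * (px X t x u + q * pu X t x u)^2 - pt T t x u * B2 (T t x u) (X t x u))"
      by (rule Egen_w)
    thus ?thesis using EE_zero[OF d, of 1] EE_zero[OF d, of 0] by simp
  qed
  moreover have "pu U t x u * px X t x u - px U t x u * pu X t x u \<noteq> 0"
    using K_nz[of t x u] by (simp add: algebra_simps)
  ultimately show "A2 t x * (px X t x u + q * pu X t x u)^2 = pt T t x u * B2 (T t x u) (X t x u)"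
    by simp
qed

end

definition Rgen :: "real \<Rightarrow> real \<Rightarrow> real \<Rightarrow> real \<Rightarrow> real \<Rightarrow> real \<Rightarrow> real \<Rightarrow> real \<Rightarrow> real \<Rightarrow> real \<Rightarrow> real \<Rightarrow> real \<Rightarrow> real \<Rightarrow> real \<Rightarrow> real \<Rightarrow> real \<Rightarrow> real \<Rightarrow> real" where
  "Rgen a Ut Ux Uu Xt Xx Uxx Uxu Uux Uuu Xxx Uv B1v A1v A2v u q =
   (Ut + (A1v - u) * q * Uu) * Xx - (Ux + q * Uu) * Xt + a * (Uv - B1v) * (Ux + q * Uu)
   - A2v * ((Uxx + q * Uxu) * Xx - (Ux + q * Uu) * Xxx + q * (Uux + q * Uuu) * Xx)"

lemma Egen_R:
  fixes a B2v A2v Xx :: real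
  assumes "a * B2v = A2v * Xx^2"
  shows "Egen a Ut Ux Uu Xt Xx 0 Uxx Uxu Uux Uuu Xxx 0 0 0 Uv B1v B2v A1v A2v u q 0
    = Xx^2 * Rgen a Ut Ux Uu Xt Xx Uxx Uxu Uux Uuu Xxx Uv B1v A1v A2v u q"
proof -
  let ?P = "(Ut + (A1v - u) * q * Uu) * Xx - (Ux + q * Uu) * Xt + a * (Uv - B1v) * (Ux + q * Uu)"
  let ?Q = "(Uxx + q * Uxu) * Xx - (Ux + q * Uu) * Xxx + q * (Uux + q * Uuu) * Xx"
  have 1: "Egen a Ut Ux Uu Xt Xx 0 Uxx Uxu Uux Uuu Xxx 0 0 0 Uv B1v B2v A1v A2v u q 0 = Xx^2 * ?P - (a * B2v) * ?Q"
    unfolding Egen_def Let_def by (simp add: algebra_simps power2_eq_square)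
  have 2: "Xx^2 * Rgen a Ut Ux Uu Xt Xx Uxx Uxu Uux Uuu Xxx Uv B1v A1v A2v u q = Xx^2 * ?P - (A2v * Xx^2) * ?Q"
    unfolding Rgen_def by (simp add: algebra_simps power2_eq_square)
  show ?thesis unfolding 1 2 assms ..
qed

lemma Uuu_generic:
  fixes A2v Xx :: real
  assumes R: "\<And>q. Rgen a Ut Ux Uu Xt Xx Uxx Uxu Uux Uuu Xxx Uv B1v A1v A2v u q = 0"
    and A: "A2v \<noteq> 0" and X: "Xx \<noteq> 0"
  shows "Uuu = 0"
proof -
  have "Rgen a Ut Ux Uu Xt Xx Uxx Uxu Uux Uuu Xxx Uv B1v A1v A2v u 1
      + Rgen a Ut Ux Uu Xt Xx Uxx Uxu Uux Uuu Xxx Uv B1v A1v A2v u (-1)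
      - 2 * Rgen a Ut Ux Uu Xt Xx Uxx Uxu Uux Uuu Xxx Uv B1v A1v A2v u 0 = -2 * A2v * Xx * Uuu"
    unfolding Rgen_def by (simp add: algebra_simps)
  hence "A2v * Xx * Uuu = 0" using R by simp
  thus ?thesis using A X by simp
qed

lemma G4:
  fixes a Vt Wt Vx Wx V Xt Xx Vxx Wxx Xxx W B1v A1v A2v :: real
  assumes R: "\<And>q u. Rgen a (Vt*u + Wt) (Vx*u + Wx) V Xt Xx (Vxx*u + Wxx) Vx Vx 0 Xxx (V*u + W) B1v A1v A2v u q = 0"
  shows "V * (a * V - Xx) = 0" "a * V * Vx = 0"
proof -
  let ?R = "\<lambda>q u. Rgen a (Vt*u + Wt) (Vx*u + Wx) V Xt Xx (Vxx*u + Wxx) Vx Vx 0 Xxx (V*u + W) B1v A1v A2v u q"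
  have "?R 1 1 - ?R 1 0 - ?R 0 1 + ?R 0 0 = V * (a * V - Xx)"
    unfolding Rgen_def by (simp add: algebra_simps)
  moreover have "?R 1 1 = 0" "?R 1 0 = 0" "?R 0 1 = 0" "?R 0 0 = 0" by (rule R)+
  ultimately show "V * (a * V - Xx) = 0" by linarith
  have "?R 0 1 + ?R 0 (-1) - 2 * ?R 0 0 = 2 * (a * V * Vx)"
    unfolding Rgen_def by (simp add: algebra_simps)
  moreover have "?R 0 (-1) = 0" by (rule R)
  ultimately show "a * V * Vx = 0" using \<open>?R 0 1 = 0\<close> \<open>?R 0 0 = 0\<close> by linarith
qed

lemma G5:
  fixes a Vt Wt Wx V Xt Xx Wxx Xxx W B1v A1v A2v :: real
  assumes R: "\<And>q u. Rgen a (Vt*u + Wt) (0*u + Wx) V Xt Xx (0*u + Wxx) 0 0 0 Xxx (V*u + W) B1v A1v A2v u q = 0"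
    and X: "Xx = a * V"
  shows "a * V * (Vt + Wx) = 0"
proof -
  let ?R = "\<lambda>q u. Rgen a (Vt*u + Wt) (0*u + Wx) V Xt Xx (0*u + Wxx) 0 0 0 Xxx (V*u + W) B1v A1v A2v u q"
  have "?R 0 1 - ?R 0 (-1) = 2 * (a * V * (Vt + Wx))"
    unfolding Rgen_def X by (simp add: algebra_simps)
  moreover have "?R 0 1 = 0" "?R 0 (-1) = 0" by (rule R)+
  ultimately show ?thesis by linarith
qed

lemma pt_cong: "(\<And>a. F a x u = G a x' u') \<Longrightarrow> pt F t x u = pt G t x' u'" by (simp add: pt_def)
lemma px_cong: "(\<And>a. F t a u = G t' a u') \<Longrightarrow> px F t x u = px G t' x u'" by (simp add: px_def)
lemma pu_cong: "(\<And>a. F t x a = G t' x' a) \<Longrightarrow> pu F t x u = pu G t' x' u" by (simp add: pu_def)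
lemma px_const: "(\<And>a. F t a u = c) \<Longrightarrow> px F t x u = 0" by (simp add: px_def)
lemma pu_const: "(\<And>a. F t x a = c) \<Longrightarrow> pu F t x u = 0" by (simp add: pu_def)

context setting begin

lemma X_const: "X t x u = X t x 0"
  by (rule DERIV_isconst_all[of "\<lambda>c. X t x c"]) (use smooth3_pu[OF sX] Xu_zero in auto)

lemma XX3: "pt X t x u = pt X t x 0" "px X t x u = px X t x 0" "px (px X) t x u = px (px X) t x 0"
  "pu (px X) t x u = 0" "px (pu X) t x u = 0" "pu (pu X) t x u = 0"
proof -
  show 1: "pt X t x u = pt X t x 0" by (rule pt_cong) (rule X_const)
  have 2: "px X t x u = px X t x 0" for t x u by (rule px_cong) (rule X_const)
  thus "px X t x u = px X t x 0" .
  show "px (px X) t x u = px (px X) t x 0" by (rule px_cong) (rule 2)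
  show "pu (px X) t x u = 0" by (rule pu_const) (rule 2)
  show "px (pu X) t x u = 0" by (rule px_const) (rule Xu_zero)
  show "pu (pu X) t x u = 0" by (rule pu_const) (rule Xu_zero)
qed

lemma Xx_nz: "px X t x u \<noteq> 0" and V_nz: "pu U t x u \<noteq> 0"
  using K_nz[of t x u] Xu_zero[of t x u] by auto

lemma B2_rel: "pt T t x u * B2 (T t x u) (X t x u) = A2 t x * (px X t x u)^2"
proof -
  have d: "px X t x u + 0 * pu X t x u \<noteq> 0" using Xx_nz by simp
  have "EE t x u 0 1 - EE t x u 0 0 = (pu U t x u * px X t x u - px U t x u * pu X t x u) *
     (A2 t x * (px X t x u + 0 * pu X t x u)^2 - pt T t x u * B2 (T t x u) (X t x u))"
    by (rule Egen_w)
  hence "(pu U t x u * px X t x u) * (A2 t x * (px X t x u)^2 - pt T t x u * B2 (T t x u) (X t x u)) = 0"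
    using EE_zero[OF d, of 1] EE_zero[OF d, of 0] Xu_zero[of t x u] by simp
  thus ?thesis using Xx_nz[of t x u] V_nz[of t x u] by simp
qed

lemma R_zero: "Rgen (pt T t x u) (pt U t x u) (px U t x u) (pu U t x u) (pt X t x u) (px X t x u)
   (px (px U) t x u) (px (pu U) t x u) (pu (px U) t x u) (pu (pu U) t x u) (px (px X) t x u)
   (U t x u) (B1 (T t x u) (X t x u)) (A1 t x) (A2 t x) u q = 0"
proof -
  have d: "px X t x u + q * pu X t x u \<noteq> 0" using Xx_nz Xu_zero by simp
  have "EE t x u q 0 = 0" by (rule EE_zero[OF d])
  hence "Egen (pt T t x u) (pt U t x u) (px U t x u) (pu U t x u) (pt X t x u) (px X t x u) 0
   (px (px U) t x u) (px (pu U) t x u) (pu (px U) t x u) (pu (pu U) t x u)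
   (px (px X) t x u) 0 0 0
   (U t x u) (B1 (T t x u) (X t x u)) (B2 (T t x u) (X t x u)) (A1 t x) (A2 t x) u q 0 = 0"
    by (simp only: Xu_zero XX3(4-6))
  hence "(px X t x u)^2 * Rgen (pt T t x u) (pt U t x u) (px U t x u) (pu U t x u) (pt X t x u) (px X t x u)
   (px (px U) t x u) (px (pu U) t x u) (pu (px U) t x u) (pu (pu U) t x u) (px (px X) t x u)
   (U t x u) (B1 (T t x u) (X t x u)) (A1 t x) (A2 t x) u q = 0"
    unfolding Egen_R[OF B2_rel] .
  thus ?thesis using Xx_nz[of t x u] by simp
qed

lemma Uuu_zero: "pu (pu U) t x u = 0"
  by (rule Uuu_generic[OF R_zero A2nz Xx_nz])

end

context setting begin

lemma sU3: "smooth3 (px (pu U))" "smooth3 (pt (pu U))" "smooth3 (pu (pu U))"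
  using smooth3_D[OF sU2(2)] by auto

lemma puU_const: "pu U t x u = pu U t x 0"
  by (rule DERIV_isconst_all[of "\<lambda>c. pu U t x c"]) (use smooth3_pu[OF sU2(2)] Uuu_zero in auto)

lemma U_lin: "U t x u = pu U t x 0 * u + U t x 0"
proof -
  have "U t x u - pu U t x 0 * u = U t x 0 - pu U t x 0 * 0"
  proof (rule DERIV_isconst_all[of "\<lambda>c. U t x c - pu U t x 0 * c"], intro allI)
    fix c
    have "((\<lambda>c. U t x c - pu U t x 0 * c) has_real_derivative pu U t x c - pu U t x 0 * 1) (at c)"
      by (intro DERIV_diff DERIV_cmult smooth3_pu sU DERIV_ident)
    thus "((\<lambda>c. U t x c - pu U t x 0 * c) has_real_derivative 0) (at c)"
      using puU_const[of t x c] by simp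
  qed
  thus ?thesis by simp
qed

lemma ptU: "pt U t x u = pt (pu U) t x 0 * u + pt U t x 0"
proof -
  have "((\<lambda>a. pu U a x 0 * u + U a x 0) has_real_derivative pt (pu U) t x 0 * u + pt U t x 0) (at t)"
    by (intro DERIV_add DERIV_cmult_right smooth3_pt sU sU2)
  hence "((\<lambda>a. U a x u) has_real_derivative pt (pu U) t x 0 * u + pt U t x 0) (at t)"
    by (subst U_lin) 
  thus ?thesis unfolding pt_def by (rule DERIV_imp_deriv)
qed

lemma pxU: "px U t x u = px (pu U) t x 0 * u + px U t x 0"
proof -
  have "((\<lambda>a. pu U t a 0 * u + U t a 0) has_real_derivative px (pu U) t x 0 * u + px U t x 0) (at x)"
    by (intro DERIV_add DERIV_cmult_right smooth3_px sU sU2)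
  hence "((\<lambda>a. U t a u) has_real_derivative px (pu U) t x 0 * u + px U t x 0) (at x)"
    by (subst U_lin) 
  thus ?thesis unfolding px_def by (rule DERIV_imp_deriv)
qed

lemma pxpuU: "px (pu U) t x u = px (pu U) t x 0"
  by (rule px_cong) (rule puU_const)

lemma pupxU: "pu (px U) t x u = px (pu U) t x 0"
proof -
  have "((\<lambda>c. px (pu U) t x 0 * c + px U t x 0) has_real_derivative px (pu U) t x 0 * 1 + 0) (at u)"
    by (intro DERIV_add DERIV_cmult DERIV_ident DERIV_const)
  hence "((\<lambda>c. px U t x c) has_real_derivative px (pu U) t x 0) (at u)"
    by (subst pxU) simp
  thus ?thesis unfolding pu_def by (rule DERIV_imp_deriv)
qed

lemma pxpxU: "px (px U) t x u = px (px (pu U)) t x 0 * u + px (px U) t x 0"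
proof -
  have "((\<lambda>b. px (pu U) t b 0 * u + px U t b 0) has_real_derivative px (px (pu U)) t x 0 * u + px (px U) t x 0) (at x)"
    by (intro DERIV_add DERIV_cmult_right smooth3_px sU2 sU3)
  hence "((\<lambda>b. px U t b u) has_real_derivative px (px (pu U)) t x 0 * u + px (px U) t x 0) (at x)"
    by (subst pxU) 
  thus ?thesis unfolding px_def[of "px U"] by (rule DERIV_imp_deriv)
qed

lemma R4: "Rgen (pt T t x 0) (pt (pu U) t x 0 * u + pt U t x 0) (px (pu U) t x 0 * u + px U t x 0) (pu U t x 0)
   (pt X t x 0) (px X t x 0) (px (px (pu U)) t x 0 * u + px (px U) t x 0) (px (pu U) t x 0) (px (pu U) t x 0) 0
   (px (px X) t x 0) (pu U t x 0 * u + U t x 0) (B1 (T t x 0) (X t x 0)) (A1 t x) (A2 t x) u q = 0"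
proof -
  have "pt T t x u = pt T t x 0" "T t x u = T t x 0" using ptT T_const by metis+
  thus ?thesis using R_zero[of t x u q]
    unfolding ptU[of t x u] pxU[of t x u] puU_const[of t x u] XX3[of t x u] pxpxU[of t x u] pxpuU[of t x u]
      pupxU[of t x u] Uuu_zero[of t x u] U_lin[of t x u] X_const[of t x u]
    by simp
qed

lemma step_i: "px X t x 0 = pt T t x 0 * pu U t x 0" and step_ii: "px (pu U) t x 0 = 0"
proof -
  note g = G4[OF R4[of t x]]
  show "px X t x 0 = pt T t x 0 * pu U t x 0" using g(1) V_nz[of t x 0] by simp
  show "px (pu U) t x 0 = 0" using g(2) V_nz[of t x 0] a_nz[of t x 0] by simp
qed

lemma step_iii: "px U t x 0 = - pt (pu U) t x 0"
proof -
  have z: "px (px (pu U)) t x 0 = 0" by (rule px_const) (rule step_ii)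
  have "Rgen (pt T t x 0) (pt (pu U) t x 0 * u + pt U t x 0) (0 * u + px U t x 0) (pu U t x 0)
   (pt X t x 0) (px X t x 0) (0 * u + px (px U) t x 0) 0 0 0
   (px (px X) t x 0) (pu U t x 0 * u + U t x 0) (B1 (T t x 0) (X t x 0)) (A1 t x) (A2 t x) u q = 0" for u q
    using R4[of t x u q] unfolding step_ii z .
  from G5[OF this step_i] have "pt (pu U) t x 0 + px U t x 0 = 0" using V_nz[of t x 0] a_nz[of t x 0] by simp
  thus ?thesis by linarith
qed

end

context setting begin

lemma main_forward:
  "\<exists>Tf X0 U0 U1 :: real \<Rightarrow> real.
       smooth1 Tf \<and> smooth1 X0 \<and> smooth1 U0 \<and> smooth1 U1 \<and>
       (\<forall>t. deriv Tf t * U1 t \<noteq> 0) \<and>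
       (\<forall>t x u. T t x u = Tf t \<and>
                X t x u = deriv Tf t * U1 t * x + X0 t \<and>
                U t x u = U1 t * u - deriv U1 t * x + U0 t) \<and>
       (\<forall>t x. deriv (deriv U1) t * x - deriv U0 t = A1 t x * deriv U1 t) \<and>
       (\<forall>t x. B1 (Tf t) (deriv Tf t * U1 t * x + X0 t)
                = U1 t * A1 t x - deriv U1 t * x + U0 t
                  - (deriv (\<lambda>s. deriv Tf s * U1 s) t * x + deriv X0 t) / deriv Tf t) \<and>
       (\<forall>t x. B2 (Tf t) (deriv Tf t * U1 t * x + X0 t)
                = deriv Tf t * (U1 t)\<^sup>2 * A2 t x)"
proof -
  define tau where "tau = (\<lambda>t. T t 0 0)"
  define X0 where "X0 = (\<lambda>t. X t 0 0)"
  define U0 where "U0 = (\<lambda>t. U t 0 0)"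
  define U1 where "U1 = (\<lambda>t. pu U t 0 0)"
  have V: "pu U t x 0 = U1 t" for t x
  proof -
    have "pu U t x 0 = pu U t 0 0"
    proof (rule DERIV_isconst_all[of "\<lambda>b. pu U t b 0"], intro allI)
      fix b
      show "((\<lambda>b. pu U t b 0) has_real_derivative 0) (at b)"
        using smooth3_px[OF sU2(2), of t 0 b] step_ii[of t b] by simp
    qed
    thus ?thesis unfolding U1_def by simp
  qed
  have a: "pt T t x u = deriv tau t" for t x u unfolding tau_def by (rule ptT)
  have Vt: "pt (pu U) t x 0 = deriv U1 t" for t x
  proof -
    have "(\<lambda>a. pu U a x 0) = U1" by (rule ext) (rule V)
    thus ?thesis unfolding pt_def by simp
  qed
  have Tf: "T t x u = tau t" for t x u unfolding tau_def by (rule T_const)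
  have Xf: "X t x u = deriv tau t * U1 t * x + X0 t" for t x u
  proof -
    have "X t x 0 - deriv tau t * U1 t * x = X t 0 0 - deriv tau t * U1 t * 0"
    proof (rule DERIV_isconst_all[of "\<lambda>b. X t b 0 - deriv tau t * U1 t * b"], intro allI)
      fix b
      have "((\<lambda>b. X t b 0 - deriv tau t * U1 t * b) has_real_derivative px X t b 0 - deriv tau t * U1 t * 1) (at b)"
        by (intro DERIV_diff DERIV_cmult smooth3_px sX DERIV_ident)
      thus "((\<lambda>b. X t b 0 - deriv tau t * U1 t * b) has_real_derivative 0) (at b)"
        using step_i[of t b] a[of t b 0] V[of t b] by simp
    qed
    thus ?thesis using X_const[of t x u] unfolding X0_def by simp
  qed
  have Uf: "U t x u = U1 t * u - deriv U1 t * x + U0 t" for t x u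
  proof -
    have "U t x 0 + deriv U1 t * x = U t 0 0 + deriv U1 t * 0"
    proof (rule DERIV_isconst_all[of "\<lambda>b. U t b 0 + deriv U1 t * b"], intro allI)
      fix b
      have "((\<lambda>b. U t b 0 + deriv U1 t * b) has_real_derivative px U t b 0 + deriv U1 t * 1) (at b)"
        by (intro DERIV_add DERIV_cmult smooth3_px sU DERIV_ident)
      thus "((\<lambda>b. U t b 0 + deriv U1 t * b) has_real_derivative 0) (at b)"
        using step_iii[of t b] Vt[of t b] by simp
    qed
    thus ?thesis using U_lin[of t x u] V[of t x] unfolding U0_def by (simp add: algebra_simps)
  qed
  have s: "smooth1 tau" "smooth1 X0" "smooth1 U0" "smooth1 U1"
    unfolding tau_def X0_def U0_def U1_def
    by (rule smooth3_smooth1, (rule sT sX sU sU2)?)+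
  have nz: "deriv tau t * U1 t \<noteq> 0" for t
    using a_nz[of t 0 0] V_nz[of t 0 0] a[of t 0 0] V[of t 0] by simp
  interpret F: form tau X0 U0 U1 using s nz by unfold_locales auto
  have eT: "T = F.TT" by (intro ext) (simp add: F.TT_def Tf)
  have eX: "X = F.XX" by (intro ext) (simp add: F.XX_def Xf)
  have eU: "U = F.UU" by (intro ext) (simp add: F.UU_def Uf)
  have "maps_equation F.TT F.XX F.UU A1 A2 B1 B2" using me unfolding eT eX eU .
  hence conds: "(\<forall>t x. deriv (deriv U1) t * x - deriv U0 t = A1 t x * deriv U1 t) \<and>
    (\<forall>t x. B1 (tau t) (deriv tau t * U1 t * x + X0 t)
                = U1 t * A1 t x - deriv U1 t * x + U0 t
                  - (deriv (\<lambda>s. deriv tau s * U1 s) t * x + deriv X0 t) / deriv tau t) \<and>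
    (\<forall>t x. B2 (tau t) (deriv tau t * U1 t * x + X0 t)
                = deriv tau t * (U1 t)\<^sup>2 * A2 t x)"
    unfolding F.maps_iff F.NN_iff .
  show ?thesis
    by (rule exI[of _ tau], rule exI[of _ X0], rule exI[of _ U0], rule exI[of _ U1])
       (use s nz Tf Xf Uf conds in blast)
qed

end

theorem proposition5:
  fixes A1 A2 B1 B2 :: "real \<Rightarrow> real \<Rightarrow> real"
    and T X U :: "real \<Rightarrow> real \<Rightarrow> real \<Rightarrow> real"
  assumes "in_class_L A1 A2"
    and "in_class_L B1 B2"
    and "point_transformation T X U"
  shows "maps_equation T X U A1 A2 B1 B2 \<longleftrightarrow>
    (\<exists>Tf X0 U0 U1 :: real \<Rightarrow> real.
       smooth1 Tf \<and> smooth1 X0 \<and> smooth1 U0 \<and> smooth1 U1 \<and>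
       (\<forall>t. deriv Tf t * U1 t \<noteq> 0) \<and>
       (\<forall>t x u. T t x u = Tf t \<and>
                X t x u = deriv Tf t * U1 t * x + X0 t \<and>
                U t x u = U1 t * u - deriv U1 t * x + U0 t) \<and>
       (\<forall>t x. deriv (deriv U1) t * x - deriv U0 t = A1 t x * deriv U1 t) \<and>
       (\<forall>t x. B1 (Tf t) (deriv Tf t * U1 t * x + X0 t)
                = U1 t * A1 t x - deriv U1 t * x + U0 t
                  - (deriv (\<lambda>s. deriv Tf s * U1 s) t * x + deriv X0 t) / deriv Tf t) \<and>
       (\<forall>t x. B2 (Tf t) (deriv Tf t * U1 t * x + X0 t)
                = deriv Tf t * (U1 t)\<^sup>2 * A2 t x))"
proof
  assume m: "maps_equation T X U A1 A2 B1 B2"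
  interpret S: setting A1 A2 B1 B2 T X U using assms m by unfold_locales
  show "\<exists>Tf X0 U0 U1 :: real \<Rightarrow> real.
       smooth1 Tf \<and> smooth1 X0 \<and> smooth1 U0 \<and> smooth1 U1 \<and>
       (\<forall>t. deriv Tf t * U1 t \<noteq> 0) \<and>
       (\<forall>t x u. T t x u = Tf t \<and>
                X t x u = deriv Tf t * U1 t * x + X0 t \<and>
                U t x u = U1 t * u - deriv U1 t * x + U0 t) \<and>
       (\<forall>t x. deriv (deriv U1) t * x - deriv U0 t = A1 t x * deriv U1 t) \<and>
       (\<forall>t x. B1 (Tf t) (deriv Tf t * U1 t * x + X0 t)
                = U1 t * A1 t x - deriv U1 t * x + U0 t
                  - (deriv (\<lambda>s. deriv Tf s * U1 s) t * x + deriv X0 t) / deriv Tf t) \<and>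
       (\<forall>t x. B2 (Tf t) (deriv Tf t * U1 t * x + X0 t)
                = deriv Tf t * (U1 t)\<^sup>2 * A2 t x)"
    by (rule S.main_forward)
next
  assume "\<exists>Tf X0 U0 U1 :: real \<Rightarrow> real.
       smooth1 Tf \<and> smooth1 X0 \<and> smooth1 U0 \<and> smooth1 U1 \<and>
       (\<forall>t. deriv Tf t * U1 t \<noteq> 0) \<and>
       (\<forall>t x u. T t x u = Tf t \<and>
                X t x u = deriv Tf t * U1 t * x + X0 t \<and>
                U t x u = U1 t * u - deriv U1 t * x + U0 t) \<and>
       (\<forall>t x. deriv (deriv U1) t * x - deriv U0 t = A1 t x * deriv U1 t) \<and>
       (\<forall>t x. B1 (Tf t) (deriv Tf t * U1 t * x + X0 t)
                = U1 t * A1 t x - deriv U1 t * x + U0 t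
                  - (deriv (\<lambda>s. deriv Tf s * U1 s) t * x + deriv X0 t) / deriv Tf t) \<and>
       (\<forall>t x. B2 (Tf t) (deriv Tf t * U1 t * x + X0 t)
                = deriv Tf t * (U1 t)\<^sup>2 * A2 t x)"
  then obtain Tf X0 U0 U1 :: "real \<Rightarrow> real" where
    s: "smooth1 Tf" "smooth1 X0" "smooth1 U0" "smooth1 U1" and
    nz: "\<forall>t. deriv Tf t * U1 t \<noteq> 0" and
    f: "\<forall>t x u. T t x u = Tf t \<and>
                X t x u = deriv Tf t * U1 t * x + X0 t \<and>
                U t x u = U1 t * u - deriv U1 t * x + U0 t" and
    c: "(\<forall>t x. deriv (deriv U1) t * x - deriv U0 t = A1 t x * deriv U1 t) \<and>
       (\<forall>t x. B1 (Tf t) (deriv Tf t * U1 t * x + X0 t)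
                = U1 t * A1 t x - deriv U1 t * x + U0 t
                  - (deriv (\<lambda>s. deriv Tf s * U1 s) t * x + deriv X0 t) / deriv Tf t) \<and>
       (\<forall>t x. B2 (Tf t) (deriv Tf t * U1 t * x + X0 t)
                = deriv Tf t * (U1 t)\<^sup>2 * A2 t x)"
    by blast
  interpret F: form Tf X0 U0 U1 using s nz by unfold_locales auto
  have eT: "T = F.TT" by (intro ext) (simp add: F.TT_def f)
  have eX: "X = F.XX" by (intro ext) (simp add: F.XX_def f)
  have eU: "U = F.UU" by (intro ext) (simp add: F.UU_def f)
  show "maps_equation T X U A1 A2 B1 B2"
    unfolding eT eX eU F.maps_iff F.NN_iff by (rule c)
qed

end
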